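(* Let $D$ be a dataset over categorical attributes $A_1,\dots,A_m$ and a metric attribute $M$, let $V$ be a record, let $f_M$ be a deterministic outlier verification function, and let $\epsilon_1>0$. Let $u$ be a utility function on contexts of sensitivity $\Delta u\le 1$: either $u_V(D,C)=|D_C|$ (context population size) or $u_V(D,C)=|D_C\cap D_{C_V}|$ for a fixed starting context $C_V$, with $u_V(D,C)=-\infty$ whenever $f_M(D_C,V)=\mathrm{false}$. Consider the Direct Approach algorithm: enumerate all $2^t$ contexts $C$, collect into $C_M$ those with $f_M(D_C,V)=\mathrm{true}$, and output $\mathrm{Exp}^{\epsilon_1}_u(D,C_M)$. Then this algorithm satisfies $(2\epsilon_1,\ COE_M(\cdot,V))$-Output Constrained Differential Privacy.
   Context: Attribute $A_i$ has a finite domain of size $|A_i|$ (all possible values, whether or not they occur in $D$); $t=\sum_{i=1}^m|A_i|$. A context is a binary vector $C=\langle c_{11},\dots,c_{1|A_1|},\dots,c_{m1},\dots,c_{m|A_m|}\rangle$ of length $t$, where $c_{ij}=1$ means the $j$-th value of $A_i$ is selected. The population $D_C$ is the set of tuples of $D$ whose value in each $A_i$ is one of the values selected for $A_i$ in $C$. An outlier verification function $f_M(D_C,V)$ returns true iff $V$ is an outlier in $D_C$ with respect to $M$ according to a fixed deterministic outlier detection algorithm. $COE_M(D,V)$ is the set of all contexts $C$ with $V\in D_C$ and $f_M(D_C,V)=\mathrm{true}$ (matching contexts). The sensitivity of $u$ is $\Delta u=\max|u(D_1,r)-u(D_2,r)|$ over neighboring datasets $D_1,D_2$ (differing by adding/removing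 one record) and all outputs $r$. The Exponential mechanism $\mathrm{Exp}^{\epsilon}_u(D,\mathcal R)$ outputs $r\in\mathcal R$ with probability $\exp(\epsilon u(D,r)/(2\Delta u))/\sum_{r'\in\mathcal R}\exp(\epsilon u(D,r')/(2\Delta u))$. Datasets $D_1,D_2$ are $f$-neighbors if they differ by adding/removing one record and $f(D_1)=f(D_2)\neq\emptyset$. A randomized mechanism $\mathcal M$ satisfies $(\epsilon,f)$-Output Constrained Differential Privacy if for all $f$-neighbors $D_1,D_2$ and all sets $S$ of outputs, $\Pr[\mathcal M(D_1)\in S]\le e^{\epsilon}\Pr[\mathcal M(D_2)\in S]$. *)

theory Defs
  imports "HOL-Probability.Probability" "HOL-Library.Multiset"
begin

text \<open>The categorical attributes are
  A_0,...,A_{m-1} with m = length sz; attribute A_i has domain {0..<sz!i}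
  (values are indexed), and attr r i is the (index of the) value of record r in A_i.
  The metric attribute M is part of the record and is only accessed by the
  outlier detection algorithm.\<close>

type_synonym ctxt = "nat \<Rightarrow> nat \<Rightarrow> bool"

definition valid_dataset :: "nat list \<Rightarrow> ('r \<Rightarrow> nat \<Rightarrow> nat) \<Rightarrow> 'r multiset \<Rightarrow> bool" where
  "valid_dataset sz attr D \<longleftrightarrow> (\<forall>r\<in>#D. \<forall>i<length sz. attr r i < sz ! i)"

text \<open>Contexts: binary vectors of length t = sum of the domain sizes, represented as
  c i j (the j-th value of A_i selected), false outside the index range.\<close>
definition contexts :: "nat list \<Rightarrow> ctxt set" where
  "contexts sz = {C. \<forall>i j. C i j \<longrightarrow> i < length sz \<and> j < sz ! i}"

definition pop :: "nat list \<Rightarrow> ('r \<Rightarrow> nat \<Rightarrow> nat) \<Rightarrow> 'r multiset \<Rightarrow> ctxt \<Rightarrow> 'r multiset" where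
  "pop sz attr D C = filter_mset (\<lambda>r. \<forall>i<length sz. C i (attr r i)) D"

text \<open>Outlier verification function f_M(P,V): true iff V is an outlier in P w.r.t. M
  according to the fixed deterministic algorithm alg (being an outlier of P
  presupposes membership in P).\<close>
definition fM :: "('r multiset \<Rightarrow> 'r \<Rightarrow> bool) \<Rightarrow> 'r multiset \<Rightarrow> 'r \<Rightarrow> bool" where
  "fM alg P V \<longleftrightarrow> V \<in># P \<and> alg P V"

definition COE :: "nat list \<Rightarrow> ('r \<Rightarrow> nat \<Rightarrow> nat) \<Rightarrow> ('r multiset \<Rightarrow> 'r \<Rightarrow> bool)
    \<Rightarrow> 'r multiset \<Rightarrow> 'r \<Rightarrow> ctxt set" where
  "COE sz attr alg D V = {C \<in> contexts sz. V \<in># pop sz attr D C \<and> fM alg (pop sz attr D C) V}"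

definition neighbors :: "'r multiset \<Rightarrow> 'r multiset \<Rightarrow> bool" where
  "neighbors D1 D2 \<longleftrightarrow> (\<exists>x. D2 = D1 + {#x#}) \<or> (\<exists>x. D1 = D2 + {#x#})"

definition sensitivity :: "nat list \<Rightarrow> ('r \<Rightarrow> nat \<Rightarrow> nat)
    \<Rightarrow> ('r multiset \<Rightarrow> ctxt \<Rightarrow> real) \<Rightarrow> real" where
  "sensitivity sz attr u = Sup {\<bar>u D1 C - u D2 C\<bar> | D1 D2 C.
      valid_dataset sz attr D1 \<and> valid_dataset sz attr D2 \<and> neighbors D1 D2 \<and> C \<in> contexts sz}"

definition exp_mech :: "real \<Rightarrow> ('d \<Rightarrow> 'o \<Rightarrow> real) \<Rightarrow> real \<Rightarrow> 'd \<Rightarrow> 'o set \<Rightarrow> 'o pmf" where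
  "exp_mech \<epsilon> u \<Delta> D R = embed_pmf (\<lambda>r. if r \<in> R then
      exp (\<epsilon> * u D r / (2 * \<Delta>)) / (\<Sum>r'\<in>R. exp (\<epsilon> * u D r' / (2 * \<Delta>))) else 0)"

definition direct_approach :: "nat list \<Rightarrow> ('r \<Rightarrow> nat \<Rightarrow> nat) \<Rightarrow> ('r multiset \<Rightarrow> 'r \<Rightarrow> bool)
    \<Rightarrow> 'r \<Rightarrow> real \<Rightarrow> ('r multiset \<Rightarrow> ctxt \<Rightarrow> real) \<Rightarrow> 'r multiset \<Rightarrow> ctxt pmf" where
  "direct_approach sz attr alg V \<epsilon>1 u D =
     exp_mech \<epsilon>1 u (sensitivity sz attr u) D
       {C \<in> contexts sz. fM alg (pop sz attr D C) V}"

definition f_neighbors :: "nat list \<Rightarrow> ('r \<Rightarrow> nat \<Rightarrow> nat) \<Rightarrow> ('r multiset \<Rightarrow> 'o set)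
    \<Rightarrow> 'r multiset \<Rightarrow> 'r multiset \<Rightarrow> bool" where
  "f_neighbors sz attr f D1 D2 \<longleftrightarrow> valid_dataset sz attr D1 \<and> valid_dataset sz attr D2 \<and>
     neighbors D1 D2 \<and> f D1 = f D2 \<and> f D1 \<noteq> {}"

definition OCDP :: "nat list \<Rightarrow> ('r \<Rightarrow> nat \<Rightarrow> nat) \<Rightarrow> real \<Rightarrow> ('r multiset \<Rightarrow> 'o set)
    \<Rightarrow> ('r multiset \<Rightarrow> 'p pmf) \<Rightarrow> bool" where
  "OCDP sz attr \<epsilon> f M \<longleftrightarrow> (\<forall>D1 D2 S. f_neighbors sz attr f D1 D2 \<longrightarrow>
      measure_pmf.prob (M D1) S \<le> exp \<epsilon> * measure_pmf.prob (M D2) S)"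

end

theory Submission
  imports Defs
begin

lemma u_form:
  assumes "u = (\<lambda>D C. real (size (pop sz attr D C))) \<or>
         (\<exists>CV \<in> contexts sz. u = (\<lambda>D C. real (size (pop sz attr D C \<inter># pop sz attr D CV))))"
  shows "\<exists>P. u = (\<lambda>D C. real (size (filter_mset (P C) D)))"
  using assms
proof
  assume "u = (\<lambda>D C. real (size (pop sz attr D C)))"
  then show ?thesis unfolding pop_def
    by (intro exI[of _ "\<lambda>C r. \<forall>i<length sz. C i (attr r i)"]) simp
next
  assume "\<exists>CV \<in> contexts sz. u = (\<lambda>D C. real (size (pop sz attr D C \<inter># pop sz attr D CV)))"
  then obtain CV where u: "u = (\<lambda>D C. real (size (pop sz attr D C \<inter># pop sz attr D CV)))" by blast
  have interf: "\<And>P Q D. filter_mset P D \<inter># filter_mset Q D = filter_mset (\<lambda>x. P x \<and> Q x) D"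
    by (rule multiset_eqI) auto
  then have "u = (\<lambda>D C. real (size (filter_mset (\<lambda>r. (\<forall>i<length sz. C i (attr r i)) \<and> (\<forall>i<length sz. CV i (attr r i))) D)))"
    unfolding u pop_def by (simp only: interf)
  then show ?thesis
    by (intro exI[of _ "\<lambda>C r. (\<forall>i<length sz. C i (attr r i)) \<and> (\<forall>i<length sz. CV i (attr r i))"])
qed

lemma nb_bound:
  assumes "neighbors D1 D2"
  shows "\<bar>real (size (filter_mset P D1)) - real (size (filter_mset P D2))\<bar> \<le> 1"
  using assms unfolding neighbors_def by auto

lemma finite_contexts: "finite (contexts sz)"
proof -
  let ?A = "SIGMA i:{..<length sz}. {..<sz!i}"
  have "contexts sz \<subseteq> (\<lambda>S i j. (i,j) \<in> S) ` Pow ?A"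
  proof
    fix C assume C: "C \<in> contexts sz"
    have "C = (\<lambda>i j. (i,j) \<in> {(i,j). C i j})" by simp
    moreover have "{(i,j). C i j} \<subseteq> ?A" using C unfolding contexts_def by auto
    ultimately show "C \<in> (\<lambda>S i j. (i,j) \<in> S) ` Pow ?A" by blast
  qed
  moreover have "finite ?A" by auto
  ultimately show ?thesis by (meson finite_Pow_iff finite_imageI finite_subset)
qed

lemma exp_mech_pmf:
  assumes "finite R" "R \<noteq> {}"
  shows "pmf (exp_mech \<epsilon> u \<Delta> D R) r = (if r \<in> R then
      exp (\<epsilon> * u D r / (2 * \<Delta>)) / (\<Sum>r'\<in>R. exp (\<epsilon> * u D r' / (2 * \<Delta>))) else 0)"
proof -
  define g where "g = (\<lambda>r. exp (\<epsilon> * u D r / (2 * \<Delta>)) / (\<Sum>r'\<in>R. exp (\<epsilon> * u D r' / (2 * \<Delta>))))"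
  have Zpos: "(\<Sum>r'\<in>R. exp (\<epsilon> * u D r' / (2 * \<Delta>))) > 0"
    using assms by (intro sum_pos) auto
  have gsum: "(\<Sum>r\<in>R. g r) = 1" unfolding g_def using Zpos
    by (simp add: sum_divide_distrib[symmetric])
  have gnn: "\<And>r. g r \<ge> 0" unfolding g_def using Zpos by simp
  have "(\<integral>\<^sup>+x. ennreal (if x \<in> R then g x else 0) \<partial>count_space UNIV)
      = (\<integral>\<^sup>+x. ennreal (g x) * indicator R x \<partial>count_space UNIV)"
    by (intro nn_integral_cong) (auto split: split_indicator)
  also have "\<dots> = (\<integral>\<^sup>+x. ennreal (g x) \<partial>count_space R)"
    by (simp add: nn_integral_count_space_indicator)
  also have "\<dots> = (\<Sum>x\<in>R. ennreal (g x))" using assms by (simp add: nn_integral_count_space_finite)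
  also have "\<dots> = ennreal (\<Sum>x\<in>R. g x)" using gnn by (simp add: sum_ennreal)
  also have "\<dots> = 1" using gsum by simp
  finally have "(\<integral>\<^sup>+x. ennreal (if x \<in> R then g x else 0) \<partial>count_space UNIV) = 1" .
  moreover have "exp_mech \<epsilon> u \<Delta> D R = embed_pmf (\<lambda>r. if r \<in> R then g r else 0)"
    unfolding exp_mech_def g_def by simp
  moreover have "pmf (embed_pmf (\<lambda>r. if r \<in> R then g r else 0)) r = (if r \<in> R then g r else 0)"
    by (rule pmf_embed_pmf) (use gnn calculation in auto)
  ultimately show ?thesis by (simp add: g_def)
qed

lemma exp_mech_ratio:
  assumes "finite R" "R \<noteq> {}" "\<Delta> \<ge> 0" "\<epsilon> > 0" "\<forall>r\<in>R. \<bar>u D1 r - u D2 r\<bar> \<le> \<Delta>"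
  shows "pmf (exp_mech \<epsilon> u \<Delta> D1 R) r \<le> exp \<epsilon> * pmf (exp_mech \<epsilon> u \<Delta> D2 R) r"
proof (cases "r \<in> R")
  case False then show ?thesis using assms by (simp add: exp_mech_pmf)
next
  case True
  define a where "a = (\<lambda>r. \<epsilon> * u D1 r / (2 * \<Delta>))"
  define b where "b = (\<lambda>r. \<epsilon> * u D2 r / (2 * \<Delta>))"
  have ab: "a r \<le> b r + \<epsilon>/2 \<and> b r \<le> a r + \<epsilon>/2" if "r \<in> R" for r
  proof (cases "\<Delta> = 0")
    case True then show ?thesis using assms unfolding a_def b_def by simp
  next
    case False
    then have D: "\<Delta> > 0" using assms by simp
    have h: "\<bar>u D1 r - u D2 r\<bar> \<le> \<Delta>" using assms that by blast
    have "a r - b r = \<epsilon> * (u D1 r - u D2 r) / (2 * \<Delta>)" unfolding a_def b_def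
      by (simp add: diff_divide_distrib right_diff_distrib)
    moreover have "\<bar>\<epsilon> * (u D1 r - u D2 r)\<bar> \<le> \<epsilon> * \<Delta>"
      using h assms by (simp add: abs_mult)
    ultimately have "\<bar>a r - b r\<bar> \<le> \<epsilon> * \<Delta> / (2 * \<Delta>)" using D
      by (simp add: abs_divide pos_divide_le_eq mult.commute)
    also have "\<dots> = \<epsilon>/2" using D by simp
    finally show ?thesis by linarith
  qed
  define e where "e = exp (\<epsilon>/2)"
  have e2: "exp \<epsilon> = e * e" unfolding e_def by (simp flip: exp_add)
  have epos: "e > 0" unfolding e_def by simp
  define Z1 where "Z1 = (\<Sum>r'\<in>R. exp (a r'))"
  define Z2 where "Z2 = (\<Sum>r'\<in>R. exp (b r'))"
  have Z1: "Z1 > 0" unfolding Z1_def using assms by (intro sum_pos) auto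
  have Z2: "Z2 > 0" unfolding Z2_def using assms by (intro sum_pos) auto
  have ex: "exp (a r) \<le> e * exp (b r)" using ab[OF True] unfolding e_def
    by (simp flip: exp_add)
  have "Z2 \<le> (\<Sum>r'\<in>R. e * exp (a r'))" unfolding Z2_def
    using ab unfolding e_def by (intro sum_mono) (simp flip: exp_add add: add.commute)
  then have eZ: "Z2 \<le> e * Z1" unfolding Z1_def by (simp add: sum_distrib_left)
  have "exp (a r) / Z1 \<le> e * exp (b r) / Z1" using ex Z1 by (simp add: divide_right_mono)
  also have "\<dots> = e * e * exp (b r) / (e * Z1)" using epos by simp
  also have "\<dots> \<le> e * e * exp (b r) / Z2" using eZ Z2 epos
    by (intro divide_left_mono) auto
  finally have "exp (a r) / Z1 \<le> exp \<epsilon> * (exp (b r) / Z2)" using e2 by simp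
  then show ?thesis using True assms
    by (simp add: exp_mech_pmf a_def b_def Z1_def Z2_def)
qed

lemma prob_le:
  fixes p q :: "'a pmf"
  assumes "\<And>x. pmf p x \<le> c * pmf q x" "set_pmf p \<subseteq> R" "set_pmf q \<subseteq> R" "finite R" "c \<ge> 0"
  shows "measure_pmf.prob p S \<le> c * measure_pmf.prob q S"
proof -
  have eq: "measure_pmf.prob r S = measure_pmf.prob r (S \<inter> R)" if "set_pmf r \<subseteq> R" for r :: "'a pmf"
  proof -
    have "measure_pmf.prob r (S \<inter> R) = measure_pmf.prob r (S \<inter> R \<inter> set_pmf r)"
      by (simp add: measure_Int_set_pmf)
    also have "S \<inter> R \<inter> set_pmf r = S \<inter> set_pmf r" using that by blast
    finally show ?thesis by (simp add: measure_Int_set_pmf)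
  qed
  have "measure_pmf.prob p S = (\<Sum>x\<in>S \<inter> R. pmf p x)"
    using eq[OF assms(2)] assms(4) by (simp add: measure_measure_pmf_finite)
  also have "\<dots> \<le> (\<Sum>x\<in>S \<inter> R. c * pmf q x)" by (intro sum_mono assms(1))
  also have "\<dots> = c * measure_pmf.prob q S"
    using eq[OF assms(3)] assms(4) by (simp add: measure_measure_pmf_finite sum_distrib_left)
  finally show ?thesis .
qed


theorem theorem2:
  fixes sz :: "nat list" and attr :: "'r \<Rightarrow> nat \<Rightarrow> nat"
    and alg :: "'r multiset \<Rightarrow> 'r \<Rightarrow> bool" and V :: 'r and \<epsilon>1 :: real
    and u :: "'r multiset \<Rightarrow> ctxt \<Rightarrow> real"
  assumes "\<epsilon>1 > 0"
    and "u = (\<lambda>D C. real (size (pop sz attr D C))) \<or>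
         (\<exists>CV \<in> contexts sz. u = (\<lambda>D C. real (size (pop sz attr D C \<inter># pop sz attr D CV))))"
    and "sensitivity sz attr u \<le> 1"
  shows "OCDP sz attr (2 * \<epsilon>1) (\<lambda>D. COE sz attr alg D V) (direct_approach sz attr alg V \<epsilon>1 u)"
  unfolding OCDP_def
proof (intro allI impI)
  fix D1 D2 S
  assume fn: "f_neighbors sz attr (\<lambda>D. COE sz attr alg D V) D1 D2"
  obtain P where P: "u = (\<lambda>D C. real (size (filter_mset (P C) D)))"
    using u_form[OF assms(2)] by blast
  define X where "X = {\<bar>u D1 C - u D2 C\<bar> | D1 D2 C.
      valid_dataset sz attr D1 \<and> valid_dataset sz attr D2 \<and> neighbors D1 D2 \<and> C \<in> contexts sz}"
  define \<Delta> where "\<Delta> = sensitivity sz attr u"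
  have DX: "\<Delta> = Sup X" unfolding \<Delta>_def X_def sensitivity_def by simp
  have bdd: "bdd_above X" unfolding bdd_above_def X_def
    by (rule exI[of _ 1]) (auto simp: P intro: nb_bound)
  have v: "valid_dataset sz attr D1" "valid_dataset sz attr D2" "neighbors D1 D2"
    and coe: "COE sz attr alg D1 V = COE sz attr alg D2 V" "COE sz attr alg D1 V \<noteq> {}"
    using fn unfolding f_neighbors_def by auto
  have le: "\<bar>u D1 C - u D2 C\<bar> \<le> \<Delta>" if "C \<in> contexts sz" for C
    unfolding DX using v that by (intro cSup_upper[OF _ bdd]) (auto simp: X_def)
  have "(\<lambda>i j. False) \<in> contexts sz" by (simp add: contexts_def)
  then have D0: "\<Delta> \<ge> 0" using le by (meson abs_ge_zero order_trans)
  have R: "{C \<in> contexts sz. fM alg (pop sz attr D C) V} = COE sz attr alg D V" for D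
    unfolding COE_def fM_def by blast
  define RR where "RR = COE sz attr alg D1 V"
  have M: "direct_approach sz attr alg V \<epsilon>1 u D = exp_mech \<epsilon>1 u \<Delta> D RR"
    if "D = D1 \<or> D = D2" for D
    using that coe(1) unfolding direct_approach_def \<Delta>_def R RR_def by (elim disjE) simp_all
  have fin: "finite RR" unfolding RR_def COE_def
    by (rule finite_subset[OF _ finite_contexts]) auto
  have RRc: "RR \<subseteq> contexts sz" unfolding RR_def COE_def by auto
  have ne: "RR \<noteq> {}" unfolding RR_def using coe by simp
  have pw: "pmf (exp_mech \<epsilon>1 u \<Delta> D1 RR) x \<le> exp \<epsilon>1 * pmf (exp_mech \<epsilon>1 u \<Delta> D2 RR) x" for x
    using fin ne D0 assms(1) le RRc by (intro exp_mech_ratio) auto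
  have sp: "set_pmf (exp_mech \<epsilon>1 u \<Delta> D RR) \<subseteq> RR" for D
    using fin ne by (auto simp: set_pmf_eq exp_mech_pmf split: if_splits)
  have "measure_pmf.prob (exp_mech \<epsilon>1 u \<Delta> D1 RR) S \<le> exp \<epsilon>1 * measure_pmf.prob (exp_mech \<epsilon>1 u \<Delta> D2 RR) S"
    by (rule prob_le[OF pw sp sp fin]) simp
  also have "\<dots> \<le> exp (2 * \<epsilon>1) * measure_pmf.prob (exp_mech \<epsilon>1 u \<Delta> D2 RR) S"
    using assms(1) by (intro mult_right_mono) auto
  finally show "measure_pmf.prob (direct_approach sz attr alg V \<epsilon>1 u D1) S
      \<le> exp (2 * \<epsilon>1) * measure_pmf.prob (direct_approach sz attr alg V \<epsilon>1 u D2) S"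
    using M by simp
qed

end
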